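(* For all integers $d\ge2$ and $N\ge1$, the quantity $\|\cdot\|_{\mathcal Q}$ is a norm on $\mathbb R^N$.
   Context: Let $|\Omega\rangle=\sum_{i=1}^d|i\rangle\otimes|i\rangle\in\mathbb C^d\otimes\mathbb C^d$ (unnormalized) and $\omega=|\Omega\rangle\langle\Omega|$. On $(\mathbb C^d)^{\otimes(N+1)}$, with tensor factors labelled $0,1,\dots,N$, $\omega_{(0,i)}\otimes I^{\otimes(N-1)}$ denotes the operator acting as $\omega$ on factors $0$ and $i$ and as the identity on the other factors. For $x\in\mathbb R^N$ let $S_x=\sum_{i=1}^N|x_i|\,\omega_{(0,i)}\otimes I^{\otimes(N-1)}$ and $\|x\|_{\mathcal Q}=\frac{d\,\lambda_{\max}(S_x)-\|x\|_1}{d^2-1}$, where $\lambda_{\max}$ denotes the largest eigenvalue and $\|x\|_1=\sum_i|x_i|$. *)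

theory Defs
  imports Complex_Main "Jordan_Normal_Form.Char_Poly"
begin

text \<open>Computational basis of (C^d)^{tensor (N+1)}: basis index k < d^(N+1) corresponds
  to the tuple of digits (digit d k 0, ..., digit d k N), digit j being the state of factor j.\<close>
definition digit :: "nat \<Rightarrow> nat \<Rightarrow> nat \<Rightarrow> nat" where
  "digit d k j = (k div d ^ j) mod d"

text \<open>Unnormalized maximally entangled vector Omega = sum_i |i>|i>, coefficient on |a>|b>.\<close>
definition Omega_coeff :: "nat \<Rightarrow> nat \<Rightarrow> complex" where
  "Omega_coeff a b = (if a = b then 1 else 0)"

text \<open>omega = |Omega><Omega|, matrix element <a b| omega |c e>.\<close>
definition omega_entry :: "nat \<Rightarrow> nat \<Rightarrow> nat \<Rightarrow> nat \<Rightarrow> complex" where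
  "omega_entry a b c e = Omega_coeff a b * cnj (Omega_coeff c e)"

text \<open>omega acting on factors 0 and i, identity on the other factors 1..N.\<close>
definition omega_0i :: "nat \<Rightarrow> nat \<Rightarrow> nat \<Rightarrow> complex mat" where
  "omega_0i d N i = mat (d ^ (N + 1)) (d ^ (N + 1)) (\<lambda>(r, c).
      omega_entry (digit d r 0) (digit d r i) (digit d c 0) (digit d c i) *
      (\<Prod>j\<in>{1..N} - {i}. if digit d r j = digit d c j then 1 else 0))"

text \<open>S_x = sum_{i=1}^N |x_i| omega_(0,i) tensor I; x is indexed by 1..N.\<close>
definition S_mat :: "nat \<Rightarrow> nat \<Rightarrow> (nat \<Rightarrow> real) \<Rightarrow> complex mat" where
  "S_mat d N x = mat (d ^ (N + 1)) (d ^ (N + 1))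
      (\<lambda>(r, c). \<Sum>i\<in>{1..N}. complex_of_real \<bar>x i\<bar> * omega_0i d N i $$ (r, c))"

text \<open>Largest eigenvalue (for Hermitian matrices all eigenvalues are real).\<close>
definition lambda_max :: "complex mat \<Rightarrow> real" where
  "lambda_max A = Max {e :: real. eigenvalue A (complex_of_real e)}"

definition norm1 :: "nat \<Rightarrow> (nat \<Rightarrow> real) \<Rightarrow> real" where
  "norm1 N x = (\<Sum>i\<in>{1..N}. \<bar>x i\<bar>)"

definition Q_norm :: "nat \<Rightarrow> nat \<Rightarrow> (nat \<Rightarrow> real) \<Rightarrow> real" where
  "Q_norm d N x = (real d * lambda_max (S_mat d N x) - norm1 N x) / (real d ^ 2 - 1)"

text \<open>f is a norm on R^N, vectors represented as functions on indices 1..N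
  (values outside 1..N are ignored).\<close>
definition is_norm_on :: "nat \<Rightarrow> ((nat \<Rightarrow> real) \<Rightarrow> real) \<Rightarrow> bool" where
  "is_norm_on N f \<longleftrightarrow>
     (\<forall>x y. (\<forall>i\<in>{1..N}. x i = y i) \<longrightarrow> f x = f y) \<and>
     (\<forall>x. 0 \<le> f x) \<and>
     (\<forall>x. f x = 0 \<longleftrightarrow> (\<forall>i\<in>{1..N}. x i = 0)) \<and>
     (\<forall>c x. f (\<lambda>i. c * x i) = \<bar>c\<bar> * f x) \<and>
     (\<forall>x y. f (\<lambda>i. x i + y i) \<le> f x + f y)"

end

theory Submission
  imports Defs "HOL-Analysis.Analysis" "Jordan_Normal_Form.Spectral_Radius"
begin

definition ipn :: "nat \<Rightarrow> (nat \<Rightarrow> complex) \<Rightarrow> (nat \<Rightarrow> complex) \<Rightarrow> complex" where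
  "ipn n x y = (\<Sum>r<n. cnj (x r) * y r)"
definition nsq :: "nat \<Rightarrow> (nat \<Rightarrow> complex) \<Rightarrow> real" where
  "nsq n x = (\<Sum>r<n. (cmod (x r))^2)"
definition qf :: "complex mat \<Rightarrow> nat \<Rightarrow> (nat \<Rightarrow> complex) \<Rightarrow> (nat \<Rightarrow> complex) \<Rightarrow> complex" where
  "qf A n x y = (\<Sum>r<n. \<Sum>c<n. cnj (x r) * A $$ (r,c) * y c)"
definition RQ :: "complex mat \<Rightarrow> nat \<Rightarrow> (nat \<Rightarrow> complex) \<Rightarrow> real" where
  "RQ A n x = Re (qf A n x x)"
definition herm :: "complex mat \<Rightarrow> nat \<Rightarrow> bool" where
  "herm A n \<longleftrightarrow> (\<forall>r<n. \<forall>c<n. A $$ (r,c) = cnj (A $$ (c,r)))"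

lemma nsq_ipn: "complex_of_real (nsq n x) = ipn n x x"
  unfolding nsq_def ipn_def of_real_sum
  by (intro sum.cong refl) (simp only: complex_norm_square mult.commute)

lemma nsq_nonneg: "nsq n x \<ge> 0"
  unfolding nsq_def by (intro sum_nonneg) auto

lemma nsq_zero: assumes "nsq n x = 0" "r < n" shows "x r = 0"
proof -
  have "(cmod (x r))^2 = 0"
    using assms sum_nonneg_eq_0_iff[of "{..<n}" "\<lambda>r. (cmod (x r))^2"] unfolding nsq_def by auto
  thus ?thesis by simp
qed

lemma cont_coord [continuous_intros]:
  "continuous_on S (\<lambda>x::nat \<Rightarrow> complex. x i)"
  by (rule continuous_on_subset[OF continuous_on_product_coordinates]) auto

lemma cont_nsq: "continuous_on S (\<lambda>x. nsq n x)"
  unfolding nsq_def by (intro continuous_intros)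

lemma cont_RQ: "continuous_on S (\<lambda>x. RQ A n x)"
  unfolding RQ_def qf_def by (intro continuous_intros)

lemma sq_le_nsq: "r < n \<Longrightarrow> (cmod (x r))^2 \<le> nsq n x"
  unfolding nsq_def by (rule member_le_sum) auto

lemma K_compact: "compact {x::nat\<Rightarrow>complex. (\<forall>r. n \<le> r \<longrightarrow> x r = 0) \<and> nsq n x = 1}"
proof -
  have c1: "compact (PiE UNIV (\<lambda>_::nat. cball (0::complex) 1))"
  proof -
    have "compactin (product_topology (\<lambda>_::nat. (euclidean::complex topology)) UNIV) (PiE UNIV (\<lambda>_. cball (0::complex) 1))"
      by (subst compactin_PiE) auto
    then show ?thesis unfolding euclidean_product_topology by simp
  qed
  have c2: "closed {x::nat\<Rightarrow>complex. (\<forall>r. n \<le> r \<longrightarrow> x r = 0)}"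
  proof -
    have "{x::nat\<Rightarrow>complex. (\<forall>r. n \<le> r \<longrightarrow> x r = 0)} = (\<Inter>r\<in>{n..}. {x. x r = 0})" by auto
    moreover have "closed {x::nat\<Rightarrow>complex. x r = 0}" for r
      by (rule closed_Collect_eq) (intro continuous_intros)+
    ultimately show ?thesis by auto
  qed
  have c3: "closed {x::nat\<Rightarrow>complex. nsq n x = 1}"
    by (rule closed_Collect_eq) (intro continuous_intros cont_nsq)+
  have eq: "{x::nat\<Rightarrow>complex. (\<forall>r. n \<le> r \<longrightarrow> x r = 0) \<and> nsq n x = 1}
     = PiE UNIV (\<lambda>_::nat. cball (0::complex) 1) \<inter> ({x. (\<forall>r. n \<le> r \<longrightarrow> x r = 0)} \<inter> {x. nsq n x = 1})"
  proof (intro equalityI subsetI)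
    fix x assume x: "x \<in> {x::nat\<Rightarrow>complex. (\<forall>r. n \<le> r \<longrightarrow> x r = 0) \<and> nsq n x = 1}"
    have "x r \<in> cball 0 1" for r
    proof (cases "r < n")
      case True
      then have "(cmod (x r))^2 \<le> 1" using sq_le_nsq[of r n x] x by auto
      then have "cmod (x r) \<le> 1" by (simp add: power_le_one_iff)
      then show ?thesis by auto
    next
      case False then show ?thesis using x by auto
    qed
    then show "x \<in> PiE UNIV (\<lambda>_::nat. cball (0::complex) 1) \<inter> ({x. (\<forall>r. n \<le> r \<longrightarrow> x r = 0)} \<inter> {x. nsq n x = 1})"
      using x by auto
  qed auto
  show ?thesis unfolding eq
    by (intro compact_Int_closed c1 closed_Int c2 c3)
qed

lemma qf_scale: "qf A n (\<lambda>r. c * x r) (\<lambda>r. c * x r) = cnj c * c * qf A n x x"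
  unfolding qf_def sum_distrib_left by (intro sum.cong refl) (simp add: algebra_simps)

lemma nsq_scale: "nsq n (\<lambda>r. c * x r) = (cmod c)^2 * nsq n x"
  unfolding nsq_def sum_distrib_left by (intro sum.cong refl) (simp add: norm_mult power_mult_distrib)

lemma qf_zero: assumes "nsq n x = 0" shows "qf A n x x = 0"
  unfolding qf_def using nsq_zero[OF assms] by simp

lemma RQ_max_exists:
  assumes "n > 0"
  shows "\<exists>u M. nsq n u = 1 \<and> RQ A n u = M \<and> (\<forall>x. RQ A n x \<le> M * nsq n x)"
proof -
  define K where "K = {x::nat\<Rightarrow>complex. (\<forall>r. n \<le> r \<longrightarrow> x r = 0) \<and> nsq n x = 1}"
  have "nsq n (\<lambda>r. if r = 0 then 1 else 0 :: complex) = (\<Sum>r<n. if r = 0 then 1 else 0)"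
    unfolding nsq_def by (intro sum.cong) auto
  also have "\<dots> = 1" using assms by (simp add: sum.delta)
  finally have n1: "nsq n (\<lambda>r. if r = 0 then 1 else 0 :: complex) = 1" .
  have "\<forall>r. n \<le> r \<longrightarrow> (if r = 0 then 1 else 0 :: complex) = 0" using assms by auto
  with n1 have "(\<lambda>r. if r = 0 then 1 else 0 :: complex) \<in> K" unfolding K_def by simp
  then have ne: "K \<noteq> {}" by (metis empty_iff)
  have cK: "compact K" unfolding K_def by (rule K_compact)
  obtain u where u: "u \<in> K" and umax: "\<And>y. y \<in> K \<Longrightarrow> RQ A n y \<le> RQ A n u"
    using continuous_attains_sup[OF cK ne cont_RQ] by metis
  have "RQ A n x \<le> RQ A n u * nsq n x" for x
  proof (cases "nsq n x = 0")
    case True then show ?thesis by (simp add: RQ_def qf_zero)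
  next
    case False
    then have pos: "nsq n x > 0" using nsq_nonneg[of n x] by simp
    define s where "s = sqrt (nsq n x)"
    have s: "s > 0" "s^2 = nsq n x" using pos unfolding s_def by auto
    define y where "y = (\<lambda>r. if r < n then complex_of_real (1/s) * x r else 0)"
    have "nsq n y = nsq n (\<lambda>r. complex_of_real (1/s) * x r)"
      unfolding y_def nsq_def by (intro sum.cong refl) auto
    then have ny: "nsq n y = (cmod (complex_of_real (1/s)))^2 * nsq n x"
      by (simp only: nsq_scale)
    have "cmod (complex_of_real (1/s)) = \<bar>1/s\<bar>" by (rule norm_of_real)
    then have cm: "cmod (complex_of_real (1/s)) = 1/s" using s by simp
    have y1: "nsq n y = 1" unfolding ny cm using s pos by (simp add: power_divide)
    have y2: "\<forall>r. n \<le> r \<longrightarrow> y r = 0" unfolding y_def by simp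
    have "y \<in> K" unfolding K_def using y1 y2 by simp
    then have le: "RQ A n y \<le> RQ A n u" by (rule umax)
    have "qf A n y y = qf A n (\<lambda>r. complex_of_real (1/s) * x r) (\<lambda>r. complex_of_real (1/s) * x r)"
      unfolding y_def qf_def by (intro sum.cong refl) auto
    then have "RQ A n y = RQ A n x / s^2"
      unfolding RQ_def qf_scale by (simp add: power2_eq_square)
    with le have "RQ A n x / s^2 \<le> RQ A n u" by simp
    then show ?thesis using s pos by (simp add: pos_divide_le_eq)
  qed
  moreover have "nsq n u = 1" using u unfolding K_def by simp
  ultimately show ?thesis by metis
qed

definition Av :: "complex mat \<Rightarrow> nat \<Rightarrow> (nat \<Rightarrow> complex) \<Rightarrow> nat \<Rightarrow> complex" where
  "Av A n y r = (\<Sum>c<n. A $$ (r,c) * y c)"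

lemma qf_Av: "qf A n x y = ipn n x (Av A n y)"
  unfolding qf_def ipn_def Av_def sum_distrib_left by (simp add: mult.assoc)

lemma ipn_conj: "ipn n x y = cnj (ipn n y x)"
  unfolding ipn_def cnj_sum by (simp add: mult.commute)

lemma nsq_Re: "nsq n x = Re (ipn n x x)"
  using nsq_ipn[of n x] by (metis Re_complex_of_real)

lemma qf_herm: assumes "herm A n" shows "qf A n x y = cnj (qf A n y x)"
proof -
  have "cnj (qf A n y x) = (\<Sum>r<n. \<Sum>c<n. y r * cnj (A $$ (r,c)) * cnj (x c))"
    unfolding qf_def cnj_sum by simp
  also have "\<dots> = (\<Sum>r<n. \<Sum>c<n. cnj (x c) * A $$ (c,r) * y r)"
  proof (intro sum.cong refl)
    fix r c assume "r \<in> {..<n}" "c \<in> {..<n}"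
    then have "A $$ (c,r) = cnj (A $$ (r,c))" using assms unfolding herm_def by blast
    then show "y r * cnj (A $$ (r,c)) * cnj (x c) = cnj (x c) * A $$ (c,r) * y r" by simp
  qed
  also have "\<dots> = qf A n x y" unfolding qf_def by (rule sum.swap)
  finally show ?thesis by simp
qed

lemma qf_expand:
  "qf A n (\<lambda>r. x r + complex_of_real t * y r) (\<lambda>r. x r + complex_of_real t * y r)
   = qf A n x x + complex_of_real t * (qf A n x y + qf A n y x) + (complex_of_real t)^2 * qf A n y y"
proof -
  have pt: "cnj (x r + complex_of_real t * y r) * A $$ (r,c) * (x c + complex_of_real t * y c)
     = cnj (x r) * A $$ (r,c) * x c + complex_of_real t * (cnj (x r) * A $$ (r,c) * y c + cnj (y r) * A $$ (r,c) * x c)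
       + (complex_of_real t)^2 * (cnj (y r) * A $$ (r,c) * y c)" for r c
    by (simp add: algebra_simps power2_eq_square)
  show ?thesis unfolding qf_def pt by (simp add: sum.distrib sum_distrib_left distrib_left)
qed

lemma ipn_expand:
  "ipn n (\<lambda>r. x r + complex_of_real t * y r) (\<lambda>r. x r + complex_of_real t * y r)
   = ipn n x x + complex_of_real t * (ipn n x y + ipn n y x) + (complex_of_real t)^2 * ipn n y y"
proof -
  have pt: "cnj (x r + complex_of_real t * y r) * (x r + complex_of_real t * y r)
     = cnj (x r) * x r + complex_of_real t * (cnj (x r) * y r + cnj (y r) * x r)
       + (complex_of_real t)^2 * (cnj (y r) * y r)" for r
    by (simp add: algebra_simps power2_eq_square)
  show ?thesis unfolding ipn_def pt by (simp add: sum.distrib sum_distrib_left distrib_left)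
qed

lemma top_eig:
  assumes h: "herm A n" and u1: "nsq n u = 1" and uM: "RQ A n u = M"
    and mx: "\<And>x. RQ A n x \<le> M * nsq n x"
  shows "\<And>r. r < n \<Longrightarrow> Av A n u r = complex_of_real M * u r"
proof -
  define w where "w = (\<lambda>r. Av A n u r - complex_of_real M * u r)"
  have ipuu: "ipn n u u = 1" using nsq_ipn[of n u] u1 by simp
  have "ipn n w u = ipn n (Av A n u) u - complex_of_real M * ipn n u u"
    unfolding w_def ipn_def by (simp add: algebra_simps sum_subtractf sum_distrib_left)
  also have "ipn n (Av A n u) u = cnj (qf A n u u)" unfolding qf_Av by (rule ipn_conj)
  finally have "Re (ipn n w u) = Re (qf A n u u) - M" using ipuu by simp
  then have Rwu: "Re (ipn n w u) = 0" using uM unfolding RQ_def by simp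
  have "ipn n w w = qf A n w u - complex_of_real M * ipn n w u"
    unfolding qf_Av w_def ipn_def by (simp add: algebra_simps sum_subtractf sum_distrib_left)
  then have nw: "nsq n w = Re (qf A n w u)" using Rwu unfolding nsq_Re by simp
  have Ruw: "Re (qf A n u w) = nsq n w" using qf_herm[OF h, of u w] nw by simp
  have Ruw2: "Re (ipn n u w) = 0" using ipn_conj[of n u w] Rwu by simp
  define C where "C = M * nsq n w - RQ A n w"
  have ineq: "2 * nsq n w \<le> t * C" if t: "t > 0" for t
  proof -
    let ?z = "\<lambda>r. u r + complex_of_real t * w r"
    have "RQ A n ?z = M + t * (2 * nsq n w) + t^2 * RQ A n w"
      unfolding RQ_def qf_expand using uM Ruw nw
      by (simp add: RQ_def power2_eq_square)
    moreover have "nsq n ?z = 1 + t^2 * nsq n w"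
      unfolding nsq_Re ipn_expand using u1 Rwu Ruw2
      by (simp add: nsq_Re power2_eq_square)
    ultimately have "M + t * (2 * nsq n w) + t^2 * RQ A n w \<le> M * (1 + t^2 * nsq n w)"
      using mx[of ?z] by simp
    then have "t * (2 * nsq n w) \<le> t * (t * C)"
      unfolding C_def by (simp add: algebra_simps power2_eq_square)
    then show ?thesis using t by simp
  qed
  have "nsq n w = 0"
  proof (rule ccontr)
    assume "nsq n w \<noteq> 0"
    then have pos: "nsq n w > 0" using nsq_nonneg[of n w] by simp
    define t where "t = nsq n w / (\<bar>C\<bar> + 1)"
    have t: "t > 0" using pos unfolding t_def by simp
    have "t * C \<le> t * \<bar>C\<bar>" using t by (simp add: mult_left_mono)
    also have "t * \<bar>C\<bar> < nsq n w" unfolding t_def using pos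
      by (simp add: divide_less_eq field_simps)
    finally show False using ineq[OF t] pos by simp
  qed
  then show "\<And>r. r < n \<Longrightarrow> Av A n u r = complex_of_real M * u r"
    using nsq_zero unfolding w_def by fastforce
qed

lemma eigen_real_le:
  assumes A: "A \<in> carrier_mat n n" and h: "herm A n" and mx: "\<And>x. RQ A n x \<le> M * nsq n x"
    and ev: "eigenvalue A (complex_of_real e)"
  shows "e \<le> M"
proof -
  obtain v where v: "v \<in> carrier_vec n" "v \<noteq> 0\<^sub>v n" "A *\<^sub>v v = complex_of_real e \<cdot>\<^sub>v v"
    using ev A unfolding eigenvalue_def eigenvector_def by auto
  define x where "x = (\<lambda>r. vec_index v r)"
  have Avx: "Av A n x r = complex_of_real e * x r" if r: "r < n" for r
  proof -
    have "vec_index (A *\<^sub>v v) r = Matrix.scalar_prod (Matrix.row A r) v" using A r by simp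
    also have "\<dots> = Av A n x r" unfolding Av_def x_def scalar_prod_def using A v r
      by (intro sum.cong) auto
    finally show ?thesis using v r unfolding x_def by simp
  qed
  have "qf A n x x = ipn n x (Av A n x)" by (rule qf_Av)
  also have "\<dots> = complex_of_real e * ipn n x x"
    unfolding ipn_def sum_distrib_left by (intro sum.cong refl) (simp add: Avx)
  finally have "RQ A n x = e * nsq n x"
    unfolding RQ_def nsq_Re by simp
  then have le: "e * nsq n x \<le> M * nsq n x" using mx[of x] by simp
  obtain r where r: "r < n" "vec_index v r \<noteq> 0" using v by (metis eq_vecI carrier_vecD index_zero_vec(1) index_zero_vec(2))
  have "nsq n x \<noteq> 0" using nsq_zero[of n x r] r unfolding x_def by auto
  then have "nsq n x > 0" using nsq_nonneg[of n x] by simp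
  with le show ?thesis by simp
qed

lemma lambda_max_char:
  assumes A: "A \<in> carrier_mat n n" and n: "n > 0" and h: "herm A n"
  shows "\<forall>x. RQ A n x \<le> lambda_max A * nsq n x"
    and "\<exists>u. nsq n u = 1 \<and> RQ A n u = lambda_max A"
proof -
  obtain u M where u1: "nsq n u = 1" and uM: "RQ A n u = M" and mx: "\<And>x. RQ A n x \<le> M * nsq n x"
    using RQ_max_exists[OF n, of A] by blast
  have eig: "\<And>r. r < n \<Longrightarrow> Av A n u r = complex_of_real M * u r"
    using top_eig[OF h u1 uM mx] by blast
  have "eigenvalue A (complex_of_real M)"
    unfolding eigenvalue_def eigenvector_def
  proof (intro exI conjI)
    let ?v = "Matrix.vec n u"
    show "?v \<in> carrier_vec (dim_row A)" using A by simp
    obtain r where r: "r < n" "u r \<noteq> 0"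
      using u1 unfolding nsq_def by (metis (no_types, lifting) lessThan_iff norm_zero power_zero_numeral sum.neutral zero_neq_one)
    show "?v \<noteq> 0\<^sub>v (dim_row A)" using A r by (metis index_vec index_zero_vec(1) carrier_matD(1))
    show "A *\<^sub>v ?v = complex_of_real M \<cdot>\<^sub>v ?v"
    proof (rule eq_vecI)
      show "dim_vec (A *\<^sub>v ?v) = dim_vec (complex_of_real M \<cdot>\<^sub>v ?v)" using A by simp
      fix r assume "r < dim_vec (complex_of_real M \<cdot>\<^sub>v ?v)"
      then have r: "r < n" by simp
      have "vec_index (A *\<^sub>v ?v) r = Matrix.scalar_prod (Matrix.row A r) ?v" using A r by simp
      also have "\<dots> = Av A n u r" unfolding Av_def scalar_prod_def using A r
        by (intro sum.cong) auto
      finally show "vec_index (A *\<^sub>v ?v) r = vec_index (complex_of_real M \<cdot>\<^sub>v ?v) r" using eig[OF r] r by simp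
    qed
  qed
  then have Min: "M \<in> {e::real. eigenvalue A (complex_of_real e)}" by simp
  have fin: "finite {e::real. eigenvalue A (complex_of_real e)}"
  proof -
    have "complex_of_real ` {e::real. eigenvalue A (complex_of_real e)} \<subseteq> spectrum A"
      unfolding spectrum_def by auto
    then have "finite (complex_of_real ` {e::real. eigenvalue A (complex_of_real e)})"
      using card_finite_spectrum(1)[OF A] finite_subset by blast
    then show ?thesis by (rule finite_imageD) (simp add: inj_on_def)
  qed
  have "lambda_max A = M"
    unfolding lambda_max_def
    by (rule Max_eqI[OF fin _ Min]) (use eigen_real_le[OF A h mx] in auto)
  then show "\<forall>x. RQ A n x \<le> lambda_max A * nsq n x" and "\<exists>u. nsq n u = 1 \<and> RQ A n u = lambda_max A"
    using mx u1 uM by auto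
qed

definition TT :: "nat \<Rightarrow> nat set \<Rightarrow> (nat \<Rightarrow> nat) set" where
  "TT d S = PiE S (\<lambda>_. {..<d})"

lemma TT_split:
  assumes "j \<notin> S"
  shows "(\<Sum>f\<in>TT d (insert j S). F f) = (\<Sum>c<d. \<Sum>h\<in>TT d S. F (h(j:=c)))"
proof -
  have "(\<Sum>f\<in>TT d (insert j S). F f) = (\<Sum>f\<in>(\<lambda>(y, g). g(j := y)) ` ({..<d} \<times> TT d S). F f)"
    unfolding TT_def PiE_insert_eq by simp
  also have "\<dots> = (\<Sum>p\<in>{..<d} \<times> TT d S. F ((\<lambda>(y, g). g(j := y)) p))"
    by (rule sum.reindex[unfolded comp_def]) (use inj_combinator[OF assms, of "\<lambda>_. {..<d}"] in \<open>simp add: TT_def\<close>)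
  also have "\<dots> = (\<Sum>c<d. \<Sum>h\<in>TT d S. F (h(j:=c)))"
    by (simp add: sum.cartesian_product case_prod_unfold)
  finally show ?thesis .
qed

lemma TT_fin: "finite S \<Longrightarrow> finite (TT d S)"
  unfolding TT_def by (simp add: finite_PiE)

lemma TT_upd: "h \<in> TT d S \<Longrightarrow> c < d \<Longrightarrow> h(j:=c) \<in> TT d (insert j S)"
  unfolding TT_def by (simp add: PiE_fun_upd)

lemma TT_upd_same: "h \<in> TT d S \<Longrightarrow> c < d \<Longrightarrow> j \<in> S \<Longrightarrow> h(j:=c) \<in> TT d S"
  using TT_upd[of h d S c j] by (simp add: insert_absorb)

lemma TT_card: "finite S \<Longrightarrow> card (TT d S) = d ^ card S"
  unfolding TT_def by (simp add: card_PiE)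

definition dec :: "nat \<Rightarrow> nat \<Rightarrow> nat \<Rightarrow> (nat \<Rightarrow> nat)" where
  "dec d N k = restrict (\<lambda>j. digit d k j) {0..N}"

lemma digits_expand: "k = (\<Sum>j<m. digit d k j * d ^ j) + (k div d ^ m) * d ^ m"
proof (induction m)
  case 0 then show ?case by simp
next
  case (Suc m)
  have "k div d ^ m = (k div d ^ m div d) * d + digit d k m"
    unfolding digit_def by simp
  moreover have "k div d ^ m div d = k div d ^ Suc m"
    by (metis div_mult2_eq power_Suc2)
  ultimately have "(k div d ^ m) * d ^ m = digit d k m * d ^ m + (k div d ^ Suc m) * d ^ Suc m"
    by (metis add.commute add_mult_distrib mult.assoc mult.commute power_Suc)
  then show ?case using Suc.IH by simp
qed

lemma digits_eq:
  assumes "k < d ^ (N+1)"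
  shows "k = (\<Sum>j\<in>{0..N}. digit d k j * d ^ j)"
proof -
  have "k div d ^ (N+1) = 0" using assms by simp
  then have "k = (\<Sum>j<N+1. digit d k j * d ^ j)" using digits_expand[where k=k and m="N+1" and d=d] by simp
  moreover have "{..<N+1} = {0..N}" by auto
  ultimately show ?thesis by metis
qed

lemma dec_bij:
  assumes "d > 0"
  shows "bij_betw (dec d N) {..<d^(N+1)} (TT d {0..N})"
proof -
  have inj: "inj_on (dec d N) {..<d^(N+1)}"
  proof (rule inj_onI)
    fix k k' assume k: "k \<in> {..<d^(N+1)}" and k': "k' \<in> {..<d^(N+1)}" and e: "dec d N k = dec d N k'"
    have "\<forall>j\<in>{0..N}. digit d k j = digit d k' j"
      using e unfolding dec_def by (metis restrict_apply')
    then show "k = k'" using digits_eq[of k d N] digits_eq[of k' d N] k k' by simp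
  qed
  have sub: "dec d N ` {..<d^(N+1)} \<subseteq> TT d {0..N}"
    unfolding dec_def TT_def digit_def using assms by auto
  have "card (dec d N ` {..<d^(N+1)}) = card (TT d {0..N})"
    using card_image[OF inj] TT_card[of "{0..N}" d] by simp
  then have "dec d N ` {..<d^(N+1)} = TT d {0..N}"
    using card_subset_eq[OF TT_fin sub] by simp
  then show ?thesis using inj unfolding bij_betw_def by simp
qed

lemma sum_dec:
  assumes "d > 0"
  shows "(\<Sum>r<d^(N+1). G (dec d N r)) = (\<Sum>f\<in>TT d {0..N}. G f)"
  using sum.reindex_bij_betw[OF dec_bij[OF assms], of G] by simp

lemma dec_digit: "j \<le> N \<Longrightarrow> dec d N r j = digit d r j"
  unfolding dec_def by simp

definition Eo :: "nat \<Rightarrow> nat \<Rightarrow> (nat\<Rightarrow>nat) \<Rightarrow> (nat\<Rightarrow>nat) \<Rightarrow> complex" where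
  "Eo N i f g = (if f 0 = f i \<and> g 0 = g i \<and> (\<forall>j\<in>{1..N}-{i}. f j = g j) then 1 else 0)"

lemma prod_ind: "finite A \<Longrightarrow> (\<Prod>j\<in>A. if P j then (1::complex) else 0) = (if \<forall>j\<in>A. P j then 1 else 0)"
proof (cases "\<forall>j\<in>A. P j")
  case True then show ?thesis by simp
next
  case False
  assume "finite A"
  then obtain j where "j \<in> A" "\<not> P j" using False by blast
  then show ?thesis using prod_zero[OF \<open>finite A\<close>, of "\<lambda>j. if P j then (1::complex) else 0"] False by auto
qed

lemma omega_entry_dec:
  assumes i: "i \<in> {1..N}" and r: "r < d^(N+1)" and c: "c < d^(N+1)"
  shows "omega_0i d N i $$ (r,c) = Eo N i (dec d N r) (dec d N c)"
proof -
  have "omega_0i d N i $$ (r,c) = (if digit d r 0 = digit d r i then 1 else 0) * (if digit d c 0 = digit d c i then 1 else 0) *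
        (\<Prod>j\<in>{1..N} - {i}. if digit d r j = digit d c j then 1 else 0)"
    unfolding omega_0i_def using r c by (simp add: omega_entry_def Omega_coeff_def)
  also have "\<dots> = Eo N i (dec d N r) (dec d N c)"
    unfolding prod_ind[OF finite_Diff[OF finite_atLeastAtMost]] Eo_def
    using i by (simp add: dec_digit)
  finally show ?thesis .
qed

definition qqT :: "nat \<Rightarrow> nat \<Rightarrow> nat \<Rightarrow> ((nat\<Rightarrow>nat) \<Rightarrow> complex) \<Rightarrow> real" where
  "qqT d N i V = (\<Sum>h\<in>TT d ({1..N}-{i}). (cmod (\<Sum>a<d. V (h(i := a, 0 := a))))^2)"

definition nsqT :: "nat \<Rightarrow> nat \<Rightarrow> ((nat\<Rightarrow>nat) \<Rightarrow> complex) \<Rightarrow> real" where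
  "nsqT d N V = (\<Sum>f\<in>TT d {0..N}. (cmod (V f))^2)"

lemma set_dec: "i \<in> {1..N} \<Longrightarrow> {0..N} = insert (0::nat) (insert i ({1..N}-{i}))"
  by (auto simp: atLeastAtMost_iff; linarith)

lemma Eo_upd:
  assumes i: "i \<in> {1..N}"
  shows "Eo N i f (h(i := b, 0 := a)) = (if f 0 = f i \<and> a = b \<and> (\<forall>j\<in>{1..N}-{i}. f j = h j) then 1 else 0)"
  using i unfolding Eo_def by auto

lemma sum_restrict_delta:
  assumes f: "f \<in> TT d {0..N}" and S: "S \<subseteq> {0..N}"
  shows "(\<Sum>h\<in>TT d S. if (\<forall>j\<in>S. f j = h j) then X h else 0) = X (restrict f S)"
proof -
  have "(\<Sum>h\<in>TT d S. if (\<forall>j\<in>S. f j = h j) then X h else 0) = (\<Sum>h\<in>TT d S. if restrict f S = h then X h else 0)"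
  proof (intro sum.cong refl)
    fix h assume h: "h \<in> TT d S"
    have "(\<forall>j\<in>S. f j = h j) \<longleftrightarrow> restrict f S = h"
    proof
      assume "\<forall>j\<in>S. f j = h j"
      then show "restrict f S = h" using h unfolding TT_def
        by (intro ext) (auto simp: restrict_def PiE_def extensional_def)
    qed auto
    then show "(if \<forall>j\<in>S. f j = h j then X h else 0) = (if restrict f S = h then X h else 0)" by simp
  qed
  also have "\<dots> = X (restrict f S)"
  proof -
    have "restrict f S \<in> TT d S" using f S unfolding TT_def by auto
    then show ?thesis using finite_subset[OF S] by (simp add: sum.delta' TT_fin)
  qed
  finally show ?thesis .
qed

lemma restrict_upd_eq:
  assumes i: "i \<in> {1..N}" and f: "f \<in> TT d {0..N}"
  shows "(restrict f ({1..N}-{i}))(i := b, 0 := a) = f(i := b, 0 := a)"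
proof (rule ext)
  fix x
  show "((restrict f ({1..N}-{i}))(i := b, 0 := a)) x = (f(i := b, 0 := a)) x"
  proof (cases "x \<in> {0..N}")
    case True then show ?thesis by auto
  next
    case False
    then have "f x = undefined" using f unfolding TT_def by (auto simp: PiE_def extensional_def)
    then show ?thesis using False by auto
  qed
qed

lemma inner_omega:
  assumes d: "d > 0" and i: "i \<in> {1..N}" and f: "f \<in> TT d {0..N}"
  shows "(\<Sum>g\<in>TT d {0..N}. Eo N i f g * V g) = (if f 0 = f i then (\<Sum>a<d. V (f(i := a, 0 := a))) else 0)"
proof -
  let ?S = "{1..N}-{i}"
  have n0: "0 \<notin> insert i ?S" using i by auto
  have ni: "i \<notin> ?S" by auto
  have "(\<Sum>g\<in>TT d {0..N}. Eo N i f g * V g)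
      = (\<Sum>a<d. \<Sum>b<d. \<Sum>h\<in>TT d ?S. Eo N i f (h(i := b, 0 := a)) * V (h(i := b, 0 := a)))"
    unfolding set_dec[OF i] TT_split[OF n0] TT_split[OF ni] by simp
  also have "\<dots> = (\<Sum>a<d. \<Sum>b<d. if f 0 = f i \<and> a = b then
        (\<Sum>h\<in>TT d ?S. if (\<forall>j\<in>?S. f j = h j) then V (h(i := b, 0 := a)) else 0) else 0)"
    unfolding Eo_upd[OF i] by (intro sum.cong refl) (auto intro: sum.cong)
  also have "\<dots> = (\<Sum>a<d. \<Sum>b<d. if f 0 = f i \<and> a = b then V (f(i := b, 0 := a)) else 0)"
  proof (intro sum.cong refl)
    fix a b
    have "?S \<subseteq> {0..N}" by auto
    from sum_restrict_delta[OF f this, of "\<lambda>h. V (h(i := b, 0 := a))"]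
    have "(\<Sum>h\<in>TT d ?S. if (\<forall>j\<in>?S. f j = h j) then V (h(i := b, 0 := a)) else 0) = V (f(i := b, 0 := a))"
      using restrict_upd_eq[OF i f, of b a] by simp
    then show "(if f 0 = f i \<and> a = b then
        (\<Sum>h\<in>TT d ?S. if (\<forall>j\<in>?S. f j = h j) then V (h(i := b, 0 := a)) else 0) else 0) =
        (if f 0 = f i \<and> a = b then V (f(i := b, 0 := a)) else 0)" by simp
  qed
  also have "\<dots> = (\<Sum>a<d. if f 0 = f i then V (f(i := a, 0 := a)) else 0)"
    by (intro sum.cong refl) (auto simp: sum.delta')
  also have "\<dots> = (if f 0 = f i then (\<Sum>a<d. V (f(i := a, 0 := a))) else 0)"
    by simp
  finally show ?thesis .
qed

lemma qf_omega:
  assumes d: "d > 0" and i: "i \<in> {1..N}"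
  shows "qf (omega_0i d N i) (d^(N+1)) (\<lambda>r. V (dec d N r)) (\<lambda>r. V (dec d N r)) = complex_of_real (qqT d N i V)"
proof -
  let ?D = "d^(N+1)"
  let ?T = "TT d {0..N}"
  let ?S = "{1..N}-{i}"
  define Wf where "Wf = (\<lambda>f. \<Sum>a<d. V (f(i := a, 0 := a)))"
  have i0: "i \<noteq> 0" using i by auto
  have "qf (omega_0i d N i) ?D (\<lambda>r. V (dec d N r)) (\<lambda>r. V (dec d N r))
      = (\<Sum>r<?D. \<Sum>c<?D. cnj (V (dec d N r)) * Eo N i (dec d N r) (dec d N c) * V (dec d N c))"
    unfolding qf_def by (intro sum.cong refl) (simp add: omega_entry_dec[OF i])
  also have "\<dots> = (\<Sum>r<?D. \<Sum>g\<in>?T. cnj (V (dec d N r)) * Eo N i (dec d N r) g * V g)"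
  proof (intro sum.cong refl)
    fix r
    show "(\<Sum>c<?D. cnj (V (dec d N r)) * Eo N i (dec d N r) (dec d N c) * V (dec d N c))
      = (\<Sum>g\<in>?T. cnj (V (dec d N r)) * Eo N i (dec d N r) g * V g)"
      by (rule sum_dec[OF d, of "\<lambda>g. cnj (V (dec d N r)) * Eo N i (dec d N r) g * V g"])
  qed
  also have "\<dots> = (\<Sum>f\<in>?T. \<Sum>g\<in>?T. cnj (V f) * Eo N i f g * V g)"
    by (rule sum_dec[OF d, of "\<lambda>f. \<Sum>g\<in>?T. cnj (V f) * Eo N i f g * V g"])
  also have "\<dots> = (\<Sum>f\<in>?T. cnj (V f) * (if f 0 = f i then Wf f else 0))"
  proof (intro sum.cong refl)
    fix f assume f: "f \<in> ?T"
    have "(\<Sum>g\<in>?T. cnj (V f) * Eo N i f g * V g) = cnj (V f) * (\<Sum>g\<in>?T. Eo N i f g * V g)"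
      by (simp add: sum_distrib_left mult.assoc)
    then show "(\<Sum>g\<in>?T. cnj (V f) * Eo N i f g * V g) = cnj (V f) * (if f 0 = f i then Wf f else 0)"
      unfolding inner_omega[OF d i f] Wf_def by simp
  qed
  also have "\<dots> = (\<Sum>a<d. \<Sum>b<d. \<Sum>h\<in>TT d ?S. cnj (V (h(i := b, 0 := a))) * (if a = b then Wf h else 0))"
  proof -
    have n0: "0 \<notin> insert i ?S" using i by auto
    have ni: "i \<notin> ?S" by auto
    have Wupd: "Wf (h(i := b, 0 := a)) = Wf h" for h b a
      unfolding Wf_def by (intro sum.cong refl arg_cong[where f=V]) (auto simp: fun_eq_iff)
    show ?thesis
      unfolding set_dec[OF i] TT_split[OF n0] TT_split[OF ni]
      by (intro sum.cong refl) (simp only: Wupd fun_upd_same fun_upd_other[OF i0])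
  qed
  also have "\<dots> = (\<Sum>a<d. \<Sum>h\<in>TT d ?S. cnj (V (h(i := a, 0 := a))) * Wf h)"
  proof (intro sum.cong refl)
    fix a assume a: "a \<in> {..<d}"
    have "(\<Sum>b<d. \<Sum>h\<in>TT d ?S. cnj (V (h(i := b, 0 := a))) * (if a = b then Wf h else 0))
        = (\<Sum>b<d. if a = b then (\<Sum>h\<in>TT d ?S. cnj (V (h(i := b, 0 := a))) * Wf h) else 0)"
      by (intro sum.cong refl) auto
    also have "\<dots> = (\<Sum>h\<in>TT d ?S. cnj (V (h(i := a, 0 := a))) * Wf h)"
      using a by (simp add: sum.delta)
    finally show "(\<Sum>b<d. \<Sum>h\<in>TT d ?S. cnj (V (h(i := b, 0 := a))) * (if a = b then Wf h else 0))
        = (\<Sum>h\<in>TT d ?S. cnj (V (h(i := a, 0 := a))) * Wf h)" .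
  qed
  also have "\<dots> = (\<Sum>h\<in>TT d ?S. cnj (Wf h) * Wf h)"
    unfolding Wf_def cnj_sum sum_distrib_right by (rule sum.swap)
  also have "\<dots> = complex_of_real (qqT d N i V)"
    unfolding qqT_def Wf_def of_real_sum
    by (intro sum.cong refl) (simp only: complex_norm_square mult.commute)
  finally show ?thesis .
qed

definition Psi :: "nat \<Rightarrow> nat \<Rightarrow> (nat \<Rightarrow> real) \<Rightarrow> ((nat\<Rightarrow>nat) \<Rightarrow> complex) \<Rightarrow> real" where
  "Psi d N a V = (\<Sum>i\<in>{1..N}. \<bar>a i\<bar> * qqT d N i V)"

lemma S_carrier: "S_mat d N a \<in> carrier_mat (d^(N+1)) (d^(N+1))"
  unfolding S_mat_def by simp

lemma S_entry: "r < d^(N+1) \<Longrightarrow> c < d^(N+1) \<Longrightarrow>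
   S_mat d N a $$ (r,c) = (\<Sum>i\<in>{1..N}. complex_of_real \<bar>a i\<bar> * omega_0i d N i $$ (r,c))"
  unfolding S_mat_def by simp

lemma Eo_sym: "Eo N i f g = Eo N i g f"
  unfolding Eo_def by metis

lemma S_herm: "herm (S_mat d N a) (d^(N+1))"
  unfolding herm_def
proof (intro allI impI)
  fix r c assume r: "r < d^(N+1)" and c: "c < d^(N+1)"
  have "omega_0i d N i $$ (r,c) = cnj (omega_0i d N i $$ (c,r))" if i: "i \<in> {1..N}" for i
    unfolding omega_entry_dec[OF i r c] omega_entry_dec[OF i c r] Eo_sym[of N i "dec d N c"]
    by (simp add: Eo_def)
  then show "S_mat d N a $$ (r, c) = cnj (S_mat d N a $$ (c, r))"
    unfolding S_entry[OF r c] S_entry[OF c r] cnj_sum by (intro sum.cong refl) simp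
qed

lemma qf_S: "qf (S_mat d N a) (d^(N+1)) v v = (\<Sum>i\<in>{1..N}. complex_of_real \<bar>a i\<bar> * qf (omega_0i d N i) (d^(N+1)) v v)"
proof -
  let ?D = "d^(N+1)"
  have "qf (S_mat d N a) ?D v v = (\<Sum>r<?D. \<Sum>c<?D. \<Sum>i\<in>{1..N}. complex_of_real \<bar>a i\<bar> * (cnj (v r) * omega_0i d N i $$ (r,c) * v c))"
    unfolding qf_def
  proof (intro sum.cong refl)
    fix r c assume "r \<in> {..<?D}" "c \<in> {..<?D}"
    then have e: "S_mat d N a $$ (r,c) = (\<Sum>i\<in>{1..N}. complex_of_real \<bar>a i\<bar> * omega_0i d N i $$ (r,c))"
      by (intro S_entry) auto
    show "cnj (v r) * S_mat d N a $$ (r, c) * v c = (\<Sum>i\<in>{1..N}. complex_of_real \<bar>a i\<bar> * (cnj (v r) * omega_0i d N i $$ (r,c) * v c))"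
      unfolding e sum_distrib_left sum_distrib_right by (intro sum.cong refl) (simp add: algebra_simps)
  qed
  also have "\<dots> = (\<Sum>r<?D. \<Sum>i\<in>{1..N}. \<Sum>c<?D. complex_of_real \<bar>a i\<bar> * (cnj (v r) * omega_0i d N i $$ (r,c) * v c))"
    by (rule sum.cong[OF refl]) (rule sum.swap)
  also have "\<dots> = (\<Sum>i\<in>{1..N}. \<Sum>r<?D. \<Sum>c<?D. complex_of_real \<bar>a i\<bar> * (cnj (v r) * omega_0i d N i $$ (r,c) * v c))"
    by (rule sum.swap)
  also have "\<dots> = (\<Sum>i\<in>{1..N}. complex_of_real \<bar>a i\<bar> * qf (omega_0i d N i) ?D v v)"
    unfolding qf_def sum_distrib_left by simp
  finally show ?thesis .
qed

lemma RQ_S: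
  assumes d: "d > 0"
  shows "RQ (S_mat d N a) (d^(N+1)) (\<lambda>r. V (dec d N r)) = Psi d N a V"
proof -
  have "qf (S_mat d N a) (d^(N+1)) (\<lambda>r. V (dec d N r)) (\<lambda>r. V (dec d N r)) = complex_of_real (Psi d N a V)"
    unfolding qf_S Psi_def of_real_sum
  proof (rule sum.cong[OF refl])
    fix i assume i: "i \<in> {1..N}"
    show "complex_of_real \<bar>a i\<bar> * qf (omega_0i d N i) (d ^ (N + 1)) (\<lambda>r. V (dec d N r)) (\<lambda>r. V (dec d N r)) =
         complex_of_real (\<bar>a i\<bar> * qqT d N i V)"
      unfolding qf_omega[OF d i] by simp
  qed
  then show ?thesis unfolding RQ_def by simp
qed

lemma nsq_dec:
  assumes d: "d > 0"
  shows "nsq (d^(N+1)) (\<lambda>r. V (dec d N r)) = nsqT d N V"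
  unfolding nsq_def nsqT_def by (rule sum_dec[OF d, of "\<lambda>f. (cmod (V f))^2"])

lemma T1:
  assumes d: "d > 0"
  shows "Psi d N a V \<le> lambda_max (S_mat d N a) * nsqT d N V"
  using lambda_max_char(1)[OF S_carrier _ S_herm, of d N a] d
  by (metis RQ_S nsq_dec zero_less_power)

lemma T2:
  assumes d: "d > 0"
  shows "\<exists>V. nsqT d N V = 1 \<and> Psi d N a V = lambda_max (S_mat d N a)"
proof -
  let ?D = "d^(N+1)"
  obtain u where u1: "nsq ?D u = 1" and uM: "RQ (S_mat d N a) ?D u = lambda_max (S_mat d N a)"
    using lambda_max_char(2)[OF S_carrier _ S_herm, of d N a] d by auto
  define V where "V = (\<lambda>f. u (inv_into {..<?D} (dec d N) f))"
  have eq: "V (dec d N r) = u r" if r: "r < ?D" for r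
    unfolding V_def using bij_betw_inv_into_left[OF dec_bij[OF d] ] r by simp
  have "nsq ?D (\<lambda>r. V (dec d N r)) = nsq ?D u" unfolding nsq_def by (intro sum.cong refl) (simp add: eq)
  moreover have "RQ (S_mat d N a) ?D (\<lambda>r. V (dec d N r)) = RQ (S_mat d N a) ?D u"
    unfolding RQ_def qf_def by (intro arg_cong[where f=Re] sum.cong refl) (simp add: eq)
  ultimately show ?thesis using u1 uM RQ_S[OF d] nsq_dec[OF d] by metis
qed

definition Wfam :: "nat \<Rightarrow> nat \<Rightarrow> nat \<Rightarrow> ((nat\<Rightarrow>nat) \<Rightarrow> complex) \<Rightarrow> (nat\<Rightarrow>nat) \<Rightarrow> complex" where
  "Wfam i w c U = (\<lambda>f. if f i = w then U (f(i := c)) else 0)"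

lemma GS:
  assumes "i \<in> R"
  shows "(\<Sum>h\<in>TT d R. G (h(i := c))) = of_nat d * (\<Sum>h\<in>TT d (R-{i}). G (h(i := c)))"
proof -
  have R: "R = insert i (R-{i})" using assms by auto
  have ni: "i \<notin> R-{i}" by auto
  have "(\<Sum>h\<in>TT d R. G (h(i := c))) = (\<Sum>b<d. \<Sum>h\<in>TT d (R-{i}). G (h(i := b, i := c)))"
    by (subst R, subst TT_split[OF ni]) simp
  also have "\<dots> = (\<Sum>b<d. \<Sum>h\<in>TT d (R-{i}). G (h(i := c)))" by simp
  also have "\<dots> = of_nat d * (\<Sum>h\<in>TT d (R-{i}). G (h(i := c)))" by simp
  finally show ?thesis .
qed

lemma GS2:
  assumes "i \<in> R"
  shows "(\<Sum>c<d. \<Sum>h\<in>TT d (R-{i}). G (h(i := c))) = (\<Sum>h\<in>TT d R. G h)"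
proof -
  have R: "R = insert i (R-{i})" using assms by auto
  have ni: "i \<notin> R-{i}" by auto
  show ?thesis by (subst (2) R, subst TT_split[OF ni]) simp
qed

lemma TT_mem: "f \<in> TT d R \<Longrightarrow> i \<in> R \<Longrightarrow> f i < d"
  unfolding TT_def by auto

lemma sum_ind_w: "x < (d::nat) \<Longrightarrow> (\<Sum>w<d. if x = w then X w else 0) = X x"
  by (simp add: sum.delta')

lemma S1:
  assumes i: "i \<in> {1..N}"
  shows "(\<Sum>w<d. \<Sum>c<d. nsqT d N (Wfam i w c U)) = real d * nsqT d N U"
proof -
  let ?T = "TT d {0..N}"
  have iT: "i \<in> {0..N}" using i by auto
  have "(\<Sum>w<d. \<Sum>c<d. nsqT d N (Wfam i w c U)) = (\<Sum>w<d. \<Sum>c<d. \<Sum>f\<in>?T. if f i = w then (cmod (U (f(i := c))))^2 else 0)"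
    unfolding nsqT_def Wfam_def by (intro sum.cong refl) auto
  also have "\<dots> = (\<Sum>c<d. \<Sum>w<d. \<Sum>f\<in>?T. if f i = w then (cmod (U (f(i := c))))^2 else 0)"
    by (rule sum.swap)
  also have "\<dots> = (\<Sum>c<d. \<Sum>f\<in>?T. \<Sum>w<d. if f i = w then (cmod (U (f(i := c))))^2 else 0)"
    by (rule sum.cong[OF refl]) (rule sum.swap)
  also have "\<dots> = (\<Sum>c<d. \<Sum>f\<in>?T. (cmod (U (f(i := c))))^2)"
    by (intro sum.cong refl) (simp add: sum_ind_w TT_mem[OF _ iT])
  also have "\<dots> = (\<Sum>c<d. real d * (\<Sum>h\<in>TT d ({0..N}-{i}). (cmod (U (h(i := c))))^2))"
    by (rule sum.cong[OF refl]) (rule GS[OF iT])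
  also have "\<dots> = real d * nsqT d N U"
    unfolding nsqT_def sum_distrib_left[symmetric] GS2[OF iT, where d=d and G="\<lambda>f. (cmod (U f))^2"] ..
  finally show ?thesis .
qed

lemma S2:
  assumes i: "i \<in> {1..N}"
  shows "(\<Sum>w<d. \<Sum>c<d. qqT d N i (Wfam i w c U)) = nsqT d N U"
proof -
  let ?S = "{1..N}-{i}"
  have i0: "i \<noteq> 0" using i by auto
  have A: "qqT d N i (Wfam i w c U) = (\<Sum>h\<in>TT d ?S. (cmod (U (h(i := c, 0 := w))))^2)" if w: "w < d" for w c
    unfolding qqT_def
  proof (rule sum.cong[OF refl])
    fix h
    have "(\<Sum>a<d. Wfam i w c U (h(i := a, 0 := a))) = (\<Sum>a<d. if w = a then U (h(i := c, 0 := w)) else 0)"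
    proof (rule sum.cong[OF refl])
      fix a
      have e1: "(h(i := a, 0 := a)) i = a" using i0 by simp
      have e2: "(h(i := a, 0 := a))(i := c) = h(i := c, 0 := a)" using i0 by (auto simp: fun_eq_iff)
      show "Wfam i w c U (h(i := a, 0 := a)) = (if w = a then U (h(i := c, 0 := w)) else 0)"
        unfolding Wfam_def e1 e2 by auto
    qed
    also have "\<dots> = U (h(i := c, 0 := w))" using w by (simp add: sum.delta)
    finally show "(cmod (\<Sum>a<d. Wfam i w c U (h(i := a, 0 := a))))^2 = (cmod (U (h(i := c, 0 := w))))^2"
      by simp
  qed
  have n0: "0 \<notin> insert i ?S" using i by auto
  have ni: "i \<notin> ?S" by auto
  have "(\<Sum>w<d. \<Sum>c<d. qqT d N i (Wfam i w c U)) = (\<Sum>w<d. \<Sum>c<d. \<Sum>h\<in>TT d ?S. (cmod (U (h(i := c, 0 := w))))^2)"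
    by (intro sum.cong refl) (simp add: A)
  also have "\<dots> = nsqT d N U"
    unfolding nsqT_def set_dec[OF i] TT_split[OF n0] TT_split[OF ni] by simp
  finally show ?thesis .
qed

lemma S3:
  assumes i: "i \<in> {1..N}" and j: "j \<in> {1..N}" and ij: "i \<noteq> j"
  shows "(\<Sum>w<d. \<Sum>c<d. qqT d N j (Wfam i w c U)) = real d * qqT d N j U"
proof -
  let ?S = "{1..N}-{j}"
  define G where "G = (\<lambda>h. (cmod (\<Sum>a<d. U (h(j := a, 0 := a))))^2)"
  have i0: "i \<noteq> 0" using i by auto
  have iS: "i \<in> ?S" using i ij by auto
  have A: "(cmod (\<Sum>a<d. Wfam i w c U (h(j := a, 0 := a))))^2 = (if h i = w then G (h(i := c)) else 0)" for w c h
  proof -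
    have e1: "(h(j := a, 0 := a)) i = h i" for a using i0 ij by simp
    have e2: "(h(j := a, 0 := a))(i := c) = (h(i := c))(j := a, 0 := a)" for a using i0 ij by (auto simp: fun_eq_iff)
    have "(\<Sum>a<d. Wfam i w c U (h(j := a, 0 := a))) = (if h i = w then (\<Sum>a<d. U ((h(i := c))(j := a, 0 := a))) else 0)"
      unfolding Wfam_def e1 e2 by simp
    then show ?thesis unfolding G_def by simp
  qed
  have "(\<Sum>w<d. \<Sum>c<d. qqT d N j (Wfam i w c U)) = (\<Sum>w<d. \<Sum>c<d. \<Sum>h\<in>TT d ?S. if h i = w then G (h(i := c)) else 0)"
    unfolding qqT_def A ..
  also have "\<dots> = (\<Sum>c<d. \<Sum>w<d. \<Sum>h\<in>TT d ?S. if h i = w then G (h(i := c)) else 0)"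
    by (rule sum.swap)
  also have "\<dots> = (\<Sum>c<d. \<Sum>h\<in>TT d ?S. \<Sum>w<d. if h i = w then G (h(i := c)) else 0)"
    by (rule sum.cong[OF refl]) (rule sum.swap)
  also have "\<dots> = (\<Sum>c<d. \<Sum>h\<in>TT d ?S. G (h(i := c)))"
    by (intro sum.cong refl) (simp add: sum_ind_w TT_mem[OF _ iS])
  also have "\<dots> = (\<Sum>c<d. real d * (\<Sum>h\<in>TT d (?S-{i}). G (h(i := c))))"
    by (rule sum.cong[OF refl]) (rule GS[OF iS])
  also have "\<dots> = real d * qqT d N j U"
    unfolding sum_distrib_left[symmetric] GS2[OF iS, where d=d and G=G]
    by (simp add: qqT_def G_def)
  finally show ?thesis .
qed

definition VE :: "nat \<Rightarrow> nat \<Rightarrow> (nat\<Rightarrow>nat) \<Rightarrow> complex" where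
  "VE N i = (\<lambda>f. if (\<forall>l\<in>{1..N}-{i}. f l = 0) \<and> f 0 = f i then 1 else 0)"

lemma zero_delta:
  assumes d: "d > 0"
  shows "(\<Sum>h\<in>TT d ({1..N}-{i}). if (\<forall>l\<in>{1..N}-{i}. h l = 0) then X else 0) = X"
proof -
  let ?S = "{1..N}-{i}"
  let ?f = "restrict (\<lambda>_. 0::nat) {0..N}"
  have f: "?f \<in> TT d {0..N}" using d unfolding TT_def by auto
  have sub: "?S \<subseteq> {0..N}" by auto
  have "(\<Sum>h\<in>TT d ?S. if (\<forall>l\<in>?S. h l = 0) then X else 0) = (\<Sum>h\<in>TT d ?S. if (\<forall>l\<in>?S. ?f l = h l) then X else 0)"
    by (intro sum.cong refl) (auto simp: restrict_def)
  also have "\<dots> = X" using sum_restrict_delta[OF f sub, of "\<lambda>_. X"] by simp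
  finally show ?thesis .
qed

lemma E1:
  assumes d: "d > 0" and i: "i \<in> {1..N}"
  shows "qqT d N i (VE N i) = (real d)^2"
proof -
  let ?S = "{1..N}-{i}"
  have i0: "i \<noteq> 0" using i by auto
  have "qqT d N i (VE N i) = (\<Sum>h\<in>TT d ?S. if (\<forall>l\<in>?S. h l = 0) then (real d)^2 else 0)"
    unfolding qqT_def
  proof (rule sum.cong[OF refl])
    fix h
    have "VE N i (h(i := a, 0 := a)) = (if (\<forall>l\<in>?S. h l = 0) then 1 else 0)" for a
      unfolding VE_def using i0 by auto
    then show "(cmod (\<Sum>a<d. VE N i (h(i := a, 0 := a))))^2 = (if (\<forall>l\<in>?S. h l = 0) then (real d)^2 else 0)"
      by simp
  qed
  also have "\<dots> = (real d)^2" by (rule zero_delta[OF d])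
  finally show ?thesis .
qed

lemma E2:
  assumes d: "d > 0" and i: "i \<in> {1..N}"
  shows "nsqT d N (VE N i) = real d"
proof -
  let ?S = "{1..N}-{i}"
  have i0: "i \<noteq> 0" using i by auto
  have n0: "0 \<notin> insert i ?S" using i by auto
  have ni: "i \<notin> ?S" by auto
  have "nsqT d N (VE N i) = (\<Sum>a<d. \<Sum>b<d. \<Sum>h\<in>TT d ?S. (cmod (VE N i (h(i := b, 0 := a))))^2)"
    unfolding nsqT_def set_dec[OF i] TT_split[OF n0] TT_split[OF ni] by simp
  also have "\<dots> = (\<Sum>a<d. \<Sum>b<d. if a = b then (\<Sum>h\<in>TT d ?S. if (\<forall>l\<in>?S. h l = 0) then 1 else 0) else 0)"
  proof (intro sum.cong refl)
    fix a b
    have "VE N i (h(i := b, 0 := a)) = (if (\<forall>l\<in>?S. h l = 0) \<and> a = b then 1 else 0)" for h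
      unfolding VE_def using i0 by auto
    then show "(\<Sum>h\<in>TT d ?S. (cmod (VE N i (h(i := b, 0 := a))))^2) =
       (if a = b then (\<Sum>h\<in>TT d ?S. if (\<forall>l\<in>?S. h l = 0) then 1 else 0) else 0)"
      by (auto intro: sum.cong)
  qed
  also have "\<dots> = (\<Sum>a<d. 1)"
  proof -
    have z: "(\<Sum>h\<in>TT d ?S. if (\<forall>l\<in>?S. h l = 0) then 1 else 0 :: real) = 1" by (rule zero_delta[OF d])
    show ?thesis unfolding z by (simp add: sum.delta)
  qed
  also have "\<dots> = real d" by simp
  finally show ?thesis .
qed

lemma qqT_nonneg: "qqT d N i V \<ge> 0"
  unfolding qqT_def by (intro sum_nonneg) auto

lemma nsqT_nonneg: "nsqT d N V \<ge> 0"
  unfolding nsqT_def by (intro sum_nonneg) auto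

definition LL :: "nat \<Rightarrow> nat \<Rightarrow> (nat \<Rightarrow> real) \<Rightarrow> real" where
  "LL d N a = lambda_max (S_mat d N a)"

lemma sum_upd_out: "(\<Sum>j\<in>A-{i}. \<bar>(a(i := t)) j\<bar> * q j) = (\<Sum>j\<in>A-{i}. \<bar>a j\<bar> * q j)"
  by (intro sum.cong refl) auto

lemma sum_remove_upd:
  assumes "i \<in> A" "finite A"
  shows "(\<Sum>j\<in>A. \<bar>(a(i := t)) j\<bar> * q j) = \<bar>t\<bar> * q i + (\<Sum>j\<in>A-{i}. \<bar>a j\<bar> * q j)"
  using sum.remove[OF assms(2,1), of "\<lambda>j. \<bar>(a(i := t)) j\<bar> * q j"] sum_upd_out[where A=A and i=i and a=a and t=t and q=q] by simp

lemma Psi_split: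
  assumes i: "i \<in> {1..N}"
  shows "Psi d N (a(i := t)) V = Psi d N (a(i := 0)) V + \<bar>t\<bar> * qqT d N i V"
proof -
  have "Psi d N (a(i := t)) V = \<bar>t\<bar> * qqT d N i V + (\<Sum>j\<in>{1..N}-{i}. \<bar>a j\<bar> * qqT d N j V)"
    unfolding Psi_def by (rule sum_remove_upd[OF i finite_atLeastAtMost])
  moreover have "Psi d N (a(i := 0)) V = (\<Sum>j\<in>{1..N}-{i}. \<bar>a j\<bar> * qqT d N j V)"
    unfolding Psi_def using sum_remove_upd[OF i finite_atLeastAtMost, of a 0 "\<lambda>j. qqT d N j V"] by simp
  ultimately show ?thesis by simp
qed

lemma Kstep:
  assumes d: "d > 0" and i: "i \<in> {1..N}" and t: "t \<ge> 0"
  shows "real d * LL d N (a(i := 0)) + t \<le> real d * LL d N (a(i := t))"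
proof -
  obtain U where U1: "nsqT d N U = 1" and UL: "Psi d N (a(i := 0)) U = LL d N (a(i := 0))"
    using T2[OF d] unfolding LL_def by blast
  let ?b = "a(i := t)"
  have le: "Psi d N ?b (Wfam i w c U) \<le> LL d N ?b * nsqT d N (Wfam i w c U)" for w c
    using T1[OF d] unfolding LL_def by blast
  have "(\<Sum>w<d. \<Sum>c<d. Psi d N ?b (Wfam i w c U)) \<le> (\<Sum>w<d. \<Sum>c<d. LL d N ?b * nsqT d N (Wfam i w c U))"
    by (intro sum_mono le)
  also have "\<dots> = LL d N ?b * (\<Sum>w<d. \<Sum>c<d. nsqT d N (Wfam i w c U))"
    by (simp add: sum_distrib_left)
  also have "\<dots> = real d * LL d N ?b" unfolding S1[OF i] U1 by simp
  finally have up: "(\<Sum>w<d. \<Sum>c<d. Psi d N ?b (Wfam i w c U)) \<le> real d * LL d N ?b" .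
  have "(\<Sum>w<d. \<Sum>c<d. Psi d N ?b (Wfam i w c U)) = (\<Sum>j\<in>{1..N}. \<bar>?b j\<bar> * (\<Sum>w<d. \<Sum>c<d. qqT d N j (Wfam i w c U)))"
    unfolding Psi_def sum_distrib_left
    by (subst sum.swap, rule sum.cong[OF refl], subst sum.swap, rule refl)
  also have "\<dots> = (\<Sum>j\<in>{1..N}. \<bar>?b j\<bar> * (if j = i then nsqT d N U else real d * qqT d N j U))"
  proof (rule sum.cong[OF refl])
    fix j assume j: "j \<in> {1..N}"
    show "\<bar>?b j\<bar> * (\<Sum>w<d. \<Sum>c<d. qqT d N j (Wfam i w c U)) = \<bar>?b j\<bar> * (if j = i then nsqT d N U else real d * qqT d N j U)"
    proof (cases "j = i")
      case True then show ?thesis using S2[OF i] by simp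
    next
      case False then show ?thesis using S3[OF i j] by simp
    qed
  qed
  also have "\<dots> = \<bar>t\<bar> * (if i = i then nsqT d N U else real d * qqT d N i U) + (\<Sum>j\<in>{1..N}-{i}. \<bar>a j\<bar> * (if j = i then nsqT d N U else real d * qqT d N j U))"
    by (rule sum_remove_upd[OF i finite_atLeastAtMost])
  also have "\<dots> = \<bar>t\<bar> * nsqT d N U + (\<Sum>j\<in>{1..N}-{i}. \<bar>a j\<bar> * (real d * qqT d N j U))"
  proof -
    have "(\<Sum>j\<in>{1..N}-{i}. \<bar>a j\<bar> * (if j = i then nsqT d N U else real d * qqT d N j U)) = (\<Sum>j\<in>{1..N}-{i}. \<bar>a j\<bar> * (real d * qqT d N j U))"
      by (intro sum.cong refl) auto
    then show ?thesis by simp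
  qed
  also have "\<dots> = t + real d * Psi d N (a(i := 0)) U"
  proof -
    have "Psi d N (a(i := 0)) U = (\<Sum>j\<in>{1..N}-{i}. \<bar>a j\<bar> * qqT d N j U)"
      unfolding Psi_def using sum_remove_upd[OF i finite_atLeastAtMost, of a 0 "\<lambda>j. qqT d N j U"] by simp
    then show ?thesis using t U1 by (simp add: sum_distrib_left algebra_simps)
  qed
  finally show ?thesis using up UL by simp
qed

lemma one_coord:
  assumes d: "d > 0" and i: "i \<in> {1..N}" and s: "0 \<le> s" and st: "s \<le> t"
  shows "(t - s) \<le> real d * (LL d N (a(i := t)) - LL d N (a(i := s)))"
proof (cases "t = 0")
  case True then show ?thesis using s st by simp
next
  case False
  then have tpos: "t > 0" using s st by simp
  define L0 where "L0 = LL d N (a(i := 0))"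
  define Lt where "Lt = LL d N (a(i := t))"
  define Ls where "Ls = LL d N (a(i := s))"
  obtain V where V1: "nsqT d N V = 1" and VL: "Psi d N (a(i := s)) V = Ls"
    using T2[OF d] unfolding LL_def Ls_def by blast
  define P0 where "P0 = Psi d N (a(i := 0)) V"
  define q where "q = qqT d N i V"
  have b0: "P0 \<le> L0" using T1[OF d, of N "a(i := 0)" V] V1 unfolding LL_def L0_def P0_def by simp
  have bt: "P0 + t * q \<le> Lt"
    using T1[OF d, of N "a(i := t)" V] V1 Psi_split[OF i, of d a t V] tpos unfolding LL_def Lt_def P0_def q_def by simp
  have ps: "Ls = P0 + s * q"
    using Psi_split[OF i, of d a s V] s VL unfolding P0_def q_def by simp
  have k: "real d * L0 + t \<le> real d * Lt" unfolding L0_def Lt_def by (rule Kstep[OF d i tpos[THEN less_imp_le]])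
  have c1: "t * Ls \<le> (t - s) * L0 + s * Lt"
  proof -
    have e: "t * Ls = (t - s) * P0 + s * (P0 + t * q)" unfolding ps by (simp add: algebra_simps)
    have m1: "(t - s) * P0 \<le> (t - s) * L0" using b0 st by (simp add: mult_left_mono)
    have m2: "s * (P0 + t * q) \<le> s * Lt" using bt s by (simp add: mult_left_mono)
    show ?thesis unfolding e using m1 m2 by linarith
  qed
  have h1: "(t - s) * t \<le> (t - s) * (real d * Lt - real d * L0)"
    using k st by (simp add: mult_left_mono)
  have h2: "real d * (t * Ls) \<le> real d * ((t - s) * L0 + s * Lt)"
    using c1 by (simp add: mult_left_mono)
  have eq: "t * (real d * Lt - real d * Ls) - (t - s) * (real d * Lt - real d * L0)
      = real d * ((t - s) * L0 + s * Lt) - real d * (t * Ls)"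
    by (simp add: algebra_simps)
  have "(t - s) * t \<le> t * (real d * Lt - real d * Ls)" using h1 h2 eq by linarith
  then have "t * (t - s) \<le> t * (real d * (Lt - Ls))" by (simp add: algebra_simps)
  then show ?thesis using tpos unfolding Lt_def Ls_def by simp
qed

definition Fn :: "nat \<Rightarrow> nat \<Rightarrow> (nat \<Rightarrow> real) \<Rightarrow> real" where
  "Fn d N a = real d * LL d N a - norm1 N a"

lemma S_abs: "(\<forall>i\<in>{1..N}. \<bar>a i\<bar> = \<bar>b i\<bar>) \<Longrightarrow> S_mat d N a = S_mat d N b"
proof -
  assume h: "\<forall>i\<in>{1..N}. \<bar>a i\<bar> = \<bar>b i\<bar>"
  show ?thesis unfolding S_mat_def
  proof (intro cong_mat refl)
    fix r c
    have "(\<Sum>i\<in>{1..N}. complex_of_real \<bar>a i\<bar> * omega_0i d N i $$ (r, c)) = (\<Sum>i\<in>{1..N}. complex_of_real \<bar>b i\<bar> * omega_0i d N i $$ (r, c))"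
      using h by (intro sum.cong refl) simp
    then show "(case (r, c) of (r, c) \<Rightarrow> \<Sum>i\<in>{1..N}. complex_of_real \<bar>a i\<bar> * omega_0i d N i $$ (r, c)) =
          (case (r, c) of (r, c) \<Rightarrow> \<Sum>i\<in>{1..N}. complex_of_real \<bar>b i\<bar> * omega_0i d N i $$ (r, c))" by simp
  qed
qed

lemma LL_abs: "(\<forall>i\<in>{1..N}. \<bar>a i\<bar> = \<bar>b i\<bar>) \<Longrightarrow> LL d N a = LL d N b"
  unfolding LL_def using S_abs by metis

lemma norm1_abs: "(\<forall>i\<in>{1..N}. \<bar>a i\<bar> = \<bar>b i\<bar>) \<Longrightarrow> norm1 N a = norm1 N b"
  unfolding norm1_def by (intro sum.cong refl) auto

lemma Fn_abs: "(\<forall>i\<in>{1..N}. \<bar>a i\<bar> = \<bar>b i\<bar>) \<Longrightarrow> Fn d N a = Fn d N b"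
  unfolding Fn_def using LL_abs norm1_abs by metis

lemma norm1_upd: "i \<in> {1..N} \<Longrightarrow> norm1 N (c(i := t)) = \<bar>t\<bar> + (\<Sum>j\<in>{1..N}-{i}. \<bar>c j\<bar>)"
  unfolding norm1_def using sum_remove_upd[OF _ finite_atLeastAtMost, where a=c and t=t and q="\<lambda>_. 1"] by simp

lemma mono_step:
  assumes d: "d > 0" and i: "i \<in> {1..N}" and s: "0 \<le> s" and st: "s \<le> t"
  shows "Fn d N (c(i := s)) \<le> Fn d N (c(i := t))"
proof -
  have "t - s \<le> real d * (LL d N (c(i := t)) - LL d N (c(i := s)))" by (rule one_coord[OF d i s st])
  moreover have "norm1 N (c(i := t)) - norm1 N (c(i := s)) = t - s"
    using norm1_upd[OF i, of c t] norm1_upd[OF i, of c s] s st by simp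
  ultimately show ?thesis unfolding Fn_def by (simp add: algebra_simps)
qed

lemma Fn_mono:
  assumes d: "d > 0" and ab: "\<forall>i\<in>{1..N}. \<bar>a i\<bar> \<le> \<bar>b i\<bar>"
  shows "Fn d N a \<le> Fn d N b"
proof -
  define m where "m = (\<lambda>J i. if i \<in> J then \<bar>b i\<bar> else \<bar>a i\<bar>)"
  have "J \<subseteq> {1..N} \<Longrightarrow> Fn d N a \<le> Fn d N (m J)" if "finite J" for J
    using that
  proof (induction J rule: finite_induct)
    case empty
    have "Fn d N (m {}) = Fn d N a" by (rule Fn_abs) (simp add: m_def)
    then show ?case by simp
  next
    case (insert i J)
    then have i: "i \<in> {1..N}" and J: "J \<subseteq> {1..N}" by auto
    have e1: "m (insert i J) = (m J)(i := \<bar>b i\<bar>)" unfolding m_def by (auto simp: fun_eq_iff)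
    have e2: "m J = (m J)(i := \<bar>a i\<bar>)" using insert(2) unfolding m_def by (auto simp: fun_eq_iff)
    have "Fn d N a \<le> Fn d N (m J)" using insert(3)[OF J] .
    also have "\<dots> = Fn d N ((m J)(i := \<bar>a i\<bar>))" using e2 by metis
    also have "\<dots> \<le> Fn d N ((m J)(i := \<bar>b i\<bar>))" by (rule mono_step[OF d i]) (use ab i in auto)
    also have "\<dots> = Fn d N (m (insert i J))" using e1 by simp
    finally show ?case .
  qed
  then have "Fn d N a \<le> Fn d N (m {1..N})" by simp
  also have "\<dots> = Fn d N b" by (rule Fn_abs) (simp add: m_def)
  finally show ?thesis .
qed

lemma Psi_zero: "(\<forall>i\<in>{1..N}. a i = 0) \<Longrightarrow> Psi d N a V = 0"
  unfolding Psi_def by simp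

lemma LL_zero:
  assumes d: "d > 0" and z: "\<forall>i\<in>{1..N}. a i = 0"
  shows "LL d N a = 0"
proof -
  obtain V where "nsqT d N V = 1" "Psi d N a V = LL d N a" using T2[OF d] unfolding LL_def by blast
  then show ?thesis using Psi_zero[OF z] by simp
qed

lemma Fn_zero:
  assumes d: "d > 0" and z: "\<forall>i\<in>{1..N}. a i = 0"
  shows "Fn d N a = 0"
  unfolding Fn_def LL_zero[OF d z] norm1_def using z by simp

lemma LL_lower:
  assumes d: "d > 0" and i: "i \<in> {1..N}"
  shows "real d * \<bar>a i\<bar> \<le> LL d N a"
proof -
  have "\<bar>a i\<bar> * qqT d N i (VE N i) \<le> Psi d N a (VE N i)"
    unfolding Psi_def
    by (rule member_le_sum[OF i, of "\<lambda>j. \<bar>a j\<bar> * qqT d N j (VE N i)"]) (auto intro!: mult_nonneg_nonneg qqT_nonneg)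
  also have "\<dots> \<le> LL d N a * real d" using T1[OF d, of N a "VE N i"] E2[OF d i] unfolding LL_def by simp
  finally have "real d * (real d * \<bar>a i\<bar>) \<le> real d * LL d N a" unfolding E1[OF d i] by (simp add: power2_eq_square algebra_simps)
  then show ?thesis using d by simp
qed

lemma Psi_scale: "Psi d N (\<lambda>i. k * x i) V = \<bar>k\<bar> * Psi d N x V"
  unfolding Psi_def sum_distrib_left by (intro sum.cong refl) (simp add: abs_mult)

lemma LL_hom:
  assumes d: "d > 0"
  shows "LL d N (\<lambda>i. k * x i) = \<bar>k\<bar> * LL d N x"
proof (rule antisym)
  obtain V where V1: "nsqT d N V = 1" and VL: "Psi d N (\<lambda>i. k * x i) V = LL d N (\<lambda>i. k * x i)"
    using T2[OF d] unfolding LL_def by blast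
  have "Psi d N x V \<le> LL d N x" using T1[OF d, of N x V] V1 unfolding LL_def by simp
  then show "LL d N (\<lambda>i. k * x i) \<le> \<bar>k\<bar> * LL d N x" using VL Psi_scale[of d N k x V]
    by (metis abs_ge_zero mult_left_mono)
next
  obtain V where V1: "nsqT d N V = 1" and VL: "Psi d N x V = LL d N x"
    using T2[OF d] unfolding LL_def by blast
  have "Psi d N (\<lambda>i. k * x i) V \<le> LL d N (\<lambda>i. k * x i)" using T1[OF d, of N "\<lambda>i. k * x i" V] V1 unfolding LL_def by simp
  then show "\<bar>k\<bar> * LL d N x \<le> LL d N (\<lambda>i. k * x i)" using VL Psi_scale[of d N k x V] by simp
qed

lemma LL_add:
  assumes d: "d > 0"
  shows "LL d N (\<lambda>i. \<bar>x i\<bar> + \<bar>y i\<bar>) \<le> LL d N x + LL d N y"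
proof -
  obtain V where V1: "nsqT d N V = 1" and VL: "Psi d N (\<lambda>i. \<bar>x i\<bar> + \<bar>y i\<bar>) V = LL d N (\<lambda>i. \<bar>x i\<bar> + \<bar>y i\<bar>)"
    using T2[OF d] unfolding LL_def by blast
  have "Psi d N (\<lambda>i. \<bar>x i\<bar> + \<bar>y i\<bar>) V = Psi d N x V + Psi d N y V"
    unfolding Psi_def sum.distrib[symmetric] by (intro sum.cong refl) (simp add: algebra_simps)
  moreover have "Psi d N x V \<le> LL d N x" using T1[OF d, of N x V] V1 unfolding LL_def by simp
  moreover have "Psi d N y V \<le> LL d N y" using T1[OF d, of N y V] V1 unfolding LL_def by simp
  ultimately show ?thesis using VL by simp
qed

theorem mainTheorem2:
  fixes d N :: nat
  assumes "d \<ge> 2" and "N \<ge> 1"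
  shows "is_norm_on N (Q_norm d N)"
proof -
  have d: "d > 0" using assms(1) by simp
  define D2 where "D2 = real d ^ 2 - 1"
  have D2: "D2 > 0"
  proof -
    have "real d \<ge> 2" using assms(1) by simp
    then have "real d ^ 2 \<ge> 2 ^ 2" by (rule power_mono) simp
    then show ?thesis unfolding D2_def by simp
  qed
  have Q: "Q_norm d N x = Fn d N x / D2" for x
    unfolding Q_norm_def Fn_def LL_def D2_def ..
  have F0: "Fn d N (\<lambda>_. 0) = 0" by (rule Fn_zero[OF d]) simp
  have Fnonneg: "Fn d N x \<ge> 0" for x
    using Fn_mono[OF d, where a="\<lambda>_. 0" and b=x and N=N] F0 by simp
  show ?thesis
    unfolding is_norm_on_def
  proof (intro conjI allI impI)
    fix x y :: "nat \<Rightarrow> real"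
    assume "\<forall>i\<in>{1..N}. x i = y i"
    then have "Fn d N x = Fn d N y" by (intro Fn_abs) simp
    then show "Q_norm d N x = Q_norm d N y" unfolding Q by simp
  next
    fix x
    show "0 \<le> Q_norm d N x" unfolding Q using Fnonneg[of x] D2 by simp
  next
    fix x :: "nat \<Rightarrow> real"
    show "Q_norm d N x = 0 \<longleftrightarrow> (\<forall>i\<in>{1..N}. x i = 0)"
    proof
      assume z: "\<forall>i\<in>{1..N}. x i = 0"
      show "Q_norm d N x = 0" unfolding Q Fn_zero[OF d z] by simp
    next
      assume q0: "Q_norm d N x = 0"
      show "\<forall>i\<in>{1..N}. x i = 0"
      proof (rule ccontr)
        assume "\<not> (\<forall>i\<in>{1..N}. x i = 0)"
        then obtain i where i: "i \<in> {1..N}" and xi: "x i \<noteq> 0" by blast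
        define e where "e = (\<lambda>_. 0::real)(i := x i)"
        have "Fn d N e \<le> Fn d N x" by (rule Fn_mono[OF d]) (auto simp: e_def)
        moreover have "norm1 N e = \<bar>x i\<bar>"
          unfolding e_def norm1_upd[OF i] by simp
        moreover have "real d * \<bar>e i\<bar> \<le> LL d N e" by (rule LL_lower[OF d i])
        moreover have "e i = x i" unfolding e_def by simp
        ultimately have "real d * (real d * \<bar>x i\<bar>) - \<bar>x i\<bar> \<le> Fn d N x"
          unfolding Fn_def using d by (smt (verit) mult_left_mono of_nat_0_le_iff)
        moreover have "real d * (real d * \<bar>x i\<bar>) \<ge> 4 * \<bar>x i\<bar>"
        proof -
          have "real d * real d \<ge> 2 * 2" using assms(1) by (intro mult_mono) auto
          then show ?thesis by (metis abs_ge_zero mult.assoc mult_right_mono mult.commute numeral_times_numeral semiring_norm(12) semiring_norm(13))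
        qed
        moreover have "\<bar>x i\<bar> > 0" using xi by simp
        ultimately have "Fn d N x > 0" by linarith
        then show False using q0 D2 unfolding Q by simp
      qed
    qed
  next
    fix c x
    have "Fn d N (\<lambda>i. c * x i) = \<bar>c\<bar> * Fn d N x"
      unfolding Fn_def LL_hom[OF d] norm1_def
      by (simp add: abs_mult sum_distrib_left algebra_simps)
    then show "Q_norm d N (\<lambda>i. c * x i) = \<bar>c\<bar> * Q_norm d N x" unfolding Q by simp
  next
    fix x y :: "nat \<Rightarrow> real"
    let ?z = "\<lambda>i. \<bar>x i\<bar> + \<bar>y i\<bar>"
    have "Fn d N (\<lambda>i. x i + y i) \<le> Fn d N ?z" by (rule Fn_mono[OF d]) (auto simp: abs_triangle_ineq)
    also have "\<dots> \<le> Fn d N x + Fn d N y"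
    proof -
      have "norm1 N ?z = norm1 N x + norm1 N y" unfolding norm1_def by (simp add: sum.distrib)
      moreover have "real d * LL d N ?z \<le> real d * (LL d N x + LL d N y)"
        using LL_add[OF d, of N x y] by (simp add: mult_left_mono)
      ultimately show ?thesis unfolding Fn_def by (simp add: algebra_simps)
    qed
    finally have "Fn d N (\<lambda>i. x i + y i) \<le> Fn d N x + Fn d N y" .
    then show "Q_norm d N (\<lambda>i. x i + y i) \<le> Q_norm d N x + Q_norm d N y"
      unfolding Q using D2 by (simp add: add_divide_distrib[symmetric] divide_right_mono)
  qed
qed

end
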